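(* The disjoint union of countably infinitely many isomorphic copies of a finite relational structure is unary FA-presentable.
   Context: The disjoint union of structures $\mathcal{S}^{(i)}=(S^{(i)},\sigma^{(i)}_1,\dots,\sigma^{(i)}_n)$ of the same signature, $i\in I$, is $(\bigsqcup_i S^{(i)},\bigsqcup_i\sigma^{(i)}_1,\dots,\bigsqcup_i\sigma^{(i)}_n)$. A relational structure $(S,R_1,\dots,R_n)$ is unary FA-presentable if there exist a regular language $L\subseteq a^*$ over a one-letter alphabet and a surjection $\phi:L\to S$ such that for each relation $R\in\{=,R_1,\dots,R_n\}$ of arity $r$, the set $\{(w_1,\dots,w_r)\in L^r: R(w_1\phi,\dots,w_r\phi)\}$ is regular, meaning that the set of words $\mathrm{conv}(w_1,\dots,w_r)$ over $\{a,\$\}^r$ (reading the $w_i$ in parallel, shorter words padded by $\$$) is a regular language. *)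

theory Defs
  imports Main "HOL-Library.Countable_Set"
begin

datatype sym = A | Dollar

text \<open>Letters not occurring in the language are
  irrelevant, so this coincides with regularity over any finite alphabet containing
  the letters used.\<close>
definition regular :: "'c list set \<Rightarrow> bool" where
  "regular L \<longleftrightarrow> (\<exists>(Q :: nat set) (\<delta> :: nat \<Rightarrow> 'c \<Rightarrow> nat) q0 F.
      finite Q \<and> q0 \<in> Q \<and> (\<forall>q\<in>Q. \<forall>c. \<delta> q c \<in> Q) \<and> F \<subseteq> Q \<and>
      L = {w. foldl \<delta> q0 w \<in> F})"

text \<open>Convolution of an r-tuple of words: read in parallel, shorter words padded by Dollar.
  Each letter is an r-tuple (list of length r) of symbols.\<close>
definition conv :: "sym list list \<Rightarrow> sym list list" where
  "conv ws = map (\<lambda>j. map (\<lambda>w. if j < length w then w ! j else Dollar) ws)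
                 [0..<foldr max (map length ws) 0]"

definition rel_structure :: "'u set \<Rightarrow> nat list \<Rightarrow> 'u list set list \<Rightarrow> bool" where
  "rel_structure S ar Rs \<longleftrightarrow> length Rs = length ar \<and>
     (\<forall>k<length ar. \<forall>t\<in>Rs ! k. length t = ar ! k \<and> set t \<subseteq> S)"

definition rel_iso :: "('u \<Rightarrow> 'v) \<Rightarrow> 'u set \<Rightarrow> 'u list set list \<Rightarrow> 'v set \<Rightarrow> 'v list set list \<Rightarrow> bool" where
  "rel_iso f S Rs S' Rs' \<longleftrightarrow> bij_betw f S S' \<and> length Rs = length Rs' \<and>
     (\<forall>k<length Rs. \<forall>t. set t \<subseteq> S \<longrightarrow> (t \<in> Rs ! k \<longleftrightarrow> map f t \<in> Rs' ! k))"

definition disj_union_univ :: "'i set \<Rightarrow> ('i \<Rightarrow> 'v set) \<Rightarrow> ('i \<times> 'v) set" where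
  "disj_union_univ I S = Sigma I S"

definition disj_union_rels :: "'i set \<Rightarrow> nat \<Rightarrow> ('i \<Rightarrow> 'v list set list) \<Rightarrow> ('i \<times> 'v) list set list" where
  "disj_union_rels I m Rs = map (\<lambda>k. {t. \<exists>i\<in>I. (\<forall>x\<in>set t. fst x = i) \<and> map snd t \<in> Rs i ! k}) [0..<m]"

definition unary_FA_presentable :: "'u set \<Rightarrow> nat list \<Rightarrow> 'u list set list \<Rightarrow> bool" where
  "unary_FA_presentable S ar Rs \<longleftrightarrow> (\<exists>(L :: sym list set) (\<phi> :: sym list \<Rightarrow> 'u).
     (\<forall>w\<in>L. set w \<subseteq> {A}) \<and> regular L \<and> \<phi> ` L = S \<and>
     regular {conv [w1, w2] | w1 w2. w1 \<in> L \<and> w2 \<in> L \<and> \<phi> w1 = \<phi> w2} \<and>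
     (\<forall>k<length ar. regular {conv ws | ws. length ws = ar ! k \<and> set ws \<subseteq> L \<and> map \<phi> ws \<in> Rs ! k}))"

end

theory Submission
  imports Defs
begin



abbreviation fq :: "'c list set \<Rightarrow> bool" where
  "fq L \<equiv> finite (range (\<lambda>w v. w @ v \<in> L))"

lemma regI:
  fixes L :: "'c list set"
  assumes fin: "fq L" shows "regular L"
proof -
  define B where "B = range (\<lambda>w v. w @ v \<in> L)"
  define enc where "enc = to_nat_on B"
  have injB: "inj_on enc B" unfolding enc_def using fin B_def
    by (simp add: countable_finite inj_on_to_nat_on)
  define \<delta> where "\<delta> = (\<lambda>q (c::'c). enc (\<lambda>v. inv_into B enc q (c # v)))"
  define q0 where "q0 = enc (\<lambda>v. v \<in> L)"
  define F where "F = enc ` {b\<in>B. b []}"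
  have key: "foldl \<delta> q0 w = enc (\<lambda>v. w @ v \<in> L)" for w
  proof (induction w rule: rev_induct)
    case Nil then show ?case by (simp add: q0_def)
  next
    case (snoc c w)
    have mem: "(\<lambda>v. w @ v \<in> L) \<in> B" unfolding B_def by blast
    have "foldl \<delta> q0 (w @ [c]) = \<delta> (enc (\<lambda>v. w @ v \<in> L)) c" using snoc by simp
    also have "\<dots> = enc (\<lambda>v. w @ c # v \<in> L)"
      unfolding \<delta>_def using inv_into_f_f[OF injB mem] by simp
    finally show ?case by simp
  qed
  show ?thesis unfolding regular_def
  proof (intro exI conjI)
    show "finite (enc ` B)" using fin B_def by simp
    show "q0 \<in> enc ` B" unfolding q0_def B_def by (rule imageI) (rule range_eqI[of _ _ "[]"], simp)
    show "\<forall>q\<in>enc ` B. \<forall>c. \<delta> q c \<in> enc ` B"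
    proof (intro ballI allI)
      fix q c assume "q \<in> enc ` B"
      then obtain w where q: "q = enc (\<lambda>v. w @ v \<in> L)" unfolding B_def by auto
      have mem: "(\<lambda>v. w @ v \<in> L) \<in> B" unfolding B_def by blast
      have "\<delta> q c = enc (\<lambda>v. (w @ [c]) @ v \<in> L)"
        unfolding \<delta>_def q using inv_into_f_f[OF injB mem] by simp
      then show "\<delta> q c \<in> enc ` B" unfolding B_def by blast
    qed
    show "F \<subseteq> enc ` B" unfolding F_def by blast
    show "L = {w. foldl \<delta> q0 w \<in> F}"
    proof (safe)
      fix w assume "w \<in> L"
      then show "foldl \<delta> q0 w \<in> F" unfolding key F_def B_def by auto
    next
      fix w assume "foldl \<delta> q0 w \<in> F"
      then obtain b where b: "b \<in> B" "b []" "enc (\<lambda>v. w @ v \<in> L) = enc b"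
        unfolding key F_def by auto
      have "(\<lambda>v. w @ v \<in> L) \<in> B" unfolding B_def by blast
      with b injB have "(\<lambda>v. w @ v \<in> L) = b" by (meson inj_on_def)
      with b show "w \<in> L" by (metis append_Nil2)
    qed
  qed
qed

lemma fq_Un: assumes "fq L1" "fq L2" shows "fq (L1 \<union> L2)"
proof -
  have "range (\<lambda>w v. w @ v \<in> L1 \<union> L2) \<subseteq>
     (\<lambda>(f,g) v. f v \<or> g v) ` (range (\<lambda>w v. w @ v \<in> L1) \<times> range (\<lambda>w v. w @ v \<in> L2))"
    by (auto simp: image_iff)
  then show ?thesis using assms by (meson finite_SigmaI finite_imageI finite_subset)
qed

lemma fq_empty: "fq {}" by (simp add: image_def)

lemma fq_UN: assumes "finite T" "\<And>p. p \<in> T \<Longrightarrow> fq (X p)" shows "fq (\<Union>p\<in>T. X p)"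
  using assms
proof (induction T rule: finite_induct)
  case empty then show ?case using fq_empty by simp
next
  case (insert x F)
  have "(\<Union>p\<in>insert x F. X p) = X x \<union> (\<Union>p\<in>F. X p)" by simp
  then show ?case using fq_Un[of "X x" "\<Union>p\<in>F. X p"] insert by simp
qed

lemma fq_small: assumes "L \<subseteq> {[]}" shows "fq L"
proof -
  have "(\<lambda>v. w @ v \<in> L) \<in> {\<lambda>v. v = [] \<and> [] \<in> L, \<lambda>v. False}" for w
  proof (cases "w = []")
    case True
    have "(\<lambda>v. v \<in> L) = (\<lambda>v. v = [] \<and> [] \<in> L)" using assms by blast
    then show ?thesis using True by simp
  next
    case False
    have "(\<lambda>v. w @ v \<in> L) = (\<lambda>v. False)" using assms False by auto
    then show ?thesis by simp
  qed
  then have "range (\<lambda>w v. w @ v \<in> L) \<subseteq> {\<lambda>v. v = [] \<and> [] \<in> L, \<lambda>v. False}" by blast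
  then show ?thesis by (rule finite_subset) simp
qed

lemma rep_unique:
  assumes "replicate c a @ s = replicate c' a @ s'" "s = [] \<or> hd s \<noteq> a" "s' = [] \<or> hd s' \<noteq> a"
  shows "c = c' \<and> s = s'"
  using assms
proof (induction c arbitrary: c')
  case 0 then show ?case by (cases c') auto
next
  case (Suc c) then show ?case by (cases c') auto
qed

lemma rep_decomp: "w = replicate (length (takeWhile ((=) a) w)) a @ dropWhile ((=) a) w
   \<and> (dropWhile ((=) a) w = [] \<or> hd (dropWhile ((=) a) w) \<noteq> a)"
proof (induction w)
  case Nil then show ?case by simp
next
  case (Cons x w) then show ?case by auto
qed

lemma fq_X:
  fixes a :: 'c
  assumes "a \<notin> set t" "N > 0"
  shows "fq {w. \<exists>c. w = replicate c a @ t \<and> c mod N = m0}"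
proof -
  let ?X = "{w. \<exists>c. w = replicate c a @ t \<and> c mod N = m0}"
  define cn where "cn = (\<lambda>w. length (takeWhile ((=) a) w))"
  define dw where "dw = (\<lambda>w::'c list. dropWhile ((=) a) w)"
  have dec: "w = replicate (cn w) a @ dw w" "dw w = [] \<or> hd (dw w) \<noteq> a" for w
    using rep_decomp[of w a] unfolding cn_def dw_def by auto
  have ht: "t = [] \<or> hd t \<noteq> a" using assms by (cases t) auto
  define \<Phi> where "\<Phi> = (\<lambda>(r::nat, so). case so of None \<Rightarrow> (\<lambda>v::'c list. False)
     | Some s \<Rightarrow> (if s = [] then (\<lambda>v. dw v = t \<and> (r + cn v) mod N = m0)
                  else (\<lambda>v. s @ v = t \<and> r = m0)))"
  define P where "P = (\<lambda>k. take k t) ` {..length t}"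
  have memX: "u \<in> ?X \<longleftrightarrow> dw u = t \<and> cn u mod N = m0" for u
  proof
    assume "u \<in> ?X"
    then obtain c where c: "u = replicate c a @ t" "c mod N = m0" by auto
    from rep_unique[OF _ ht dec(2)[of u], of c] c dec(1)[of u] show "dw u = t \<and> cn u mod N = m0" by metis
  next
    assume "dw u = t \<and> cn u mod N = m0"
    then have "u = replicate (cn u) a @ t \<and> cn u mod N = m0" using dec(1)[of u] by metis
    then show "u \<in> ?X" by blast
  qed
  have app1: "dw (w@v) = dw v \<and> cn (w@v) = cn w + cn v" if "\<forall>x\<in>set w. a=x" for w v
    using that by (simp add: cn_def dw_def takeWhile_append dropWhile_append takeWhile_eq_all_conv[THEN iffD2])
  have app2: "dw (w@v) = dw w @ v \<and> cn (w@v) = cn w" if "\<not>(\<forall>x\<in>set w. a=x)" for w v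
    using that by (auto simp add: cn_def dw_def takeWhile_append dropWhile_append)
  have "range (\<lambda>w v. w @ v \<in> ?X) \<subseteq> \<Phi> ` ({..<N} \<times> (Some ` P \<union> {None}))"
  proof (rule subsetI)
    fix f assume "f \<in> range (\<lambda>w v. w @ v \<in> ?X)"
    then obtain w where fw: "f = (\<lambda>v. w @ v \<in> ?X)" by auto
    show "f \<in> \<Phi> ` ({..<N} \<times> (Some ` P \<union> {None}))"
    proof (cases "\<forall>x\<in>set w. a = x")
      case True
      have "f = \<Phi> (cn w mod N, Some [])"
        unfolding fw memX \<Phi>_def using True app1 by (simp add: mod_add_left_eq)
      moreover have "[] \<in> P" unfolding P_def by force
      moreover have "cn w mod N < N" using assms(2) by simp
      ultimately show ?thesis by (intro image_eqI[where x="(cn w mod N, Some [])"]) auto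
    next
      case False
      then have ne: "dw w \<noteq> []" unfolding dw_def by simp
      have f2: "f = (\<lambda>v. dw w @ v = t \<and> cn w mod N = m0)"
        unfolding fw memX using False app2 by simp
      show ?thesis
      proof (cases "dw w \<in> P")
        case True
        have "f = \<Phi> (cn w mod N, Some (dw w))" unfolding f2 \<Phi>_def using ne by auto
        moreover have "cn w mod N < N" using assms(2) by simp
        ultimately show ?thesis using True by (intro image_eqI[where x="(cn w mod N, Some (dw w))"]) auto
      next
        case False
        have "dw w @ v \<noteq> t" for v
        proof
          assume "dw w @ v = t"
          then have "dw w = take (length (dw w)) t" "length (dw w) \<le> length t" by auto
          then show False using False unfolding P_def by auto
        qed
        then have "f = \<Phi> (0, None)" unfolding f2 \<Phi>_def by auto
        then show ?thesis using assms(2) by (intro image_eqI[where x="(0, None)"]) auto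
      qed
    qed
  qed
  moreover have "finite (\<Phi> ` ({..<N} \<times> (Some ` P \<union> {None})))"
    unfolding P_def by simp
  ultimately show ?thesis by (rule finite_subset)
qed


lemma foldr_max_add: "p \<noteq> [] \<Longrightarrow> foldr max (map (\<lambda>x. Q + x) p) 0 = Q + foldr max p (0::nat)"
proof (induction p)
  case Nil then show ?case by simp
next
  case (Cons a p) then show ?case by (cases p) (auto simp: max_def)
qed

lemma foldr_max_ge: "x \<in> set p \<Longrightarrow> x \<le> foldr max p (0::nat)"
  by (induction p) auto

definition tp :: "nat list \<Rightarrow> sym list list" where
  "tp p = map (\<lambda>s. map (\<lambda>x. if s < x then A else Dollar) p) [Min (set p)..<foldr max p 0]"

lemma conv_rep:
  assumes "p \<noteq> []"
  shows "conv (map (\<lambda>x. replicate (Q + x) A) p) = replicate (Q + Min (set p)) (replicate (length p) A) @ tp p"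
proof -
  let ?m = "Min (set p)" and ?M = "foldr max p (0::nat)"
  have mM: "?m \<le> ?M" using assms foldr_max_ge[of ?m p] by simp
  have len: "foldr max (map length (map (\<lambda>x. replicate (Q + x) A) p)) 0 = Q + ?M"
    using foldr_max_add[OF assms] by (simp add: comp_def)
  show ?thesis
    unfolding conv_def len
  proof (rule nth_equalityI)
    show "length (map (\<lambda>j. map (\<lambda>w. if j < length w then w ! j else Dollar) (map (\<lambda>x. replicate (Q + x) A) p)) [0..<Q + ?M])
       = length (replicate (Q + ?m) (replicate (length p) A) @ tp p)"
      using mM by (simp add: tp_def)
  next
    fix j assume j: "j < length (map (\<lambda>j. map (\<lambda>w. if j < length w then w ! j else Dollar) (map (\<lambda>x. replicate (Q + x) A) p)) [0..<Q + ?M])"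
    then have jM: "j < Q + ?M" by simp
    have lhs: "map (\<lambda>j. map (\<lambda>w. if j < length w then w ! j else Dollar) (map (\<lambda>x. replicate (Q + x) A) p)) [0..<Q + ?M] ! j
        = map (\<lambda>x. if j < Q + x then A else Dollar) p"
      using jM by simp
    show "map (\<lambda>j. map (\<lambda>w. if j < length w then w ! j else Dollar) (map (\<lambda>x. replicate (Q + x) A) p)) [0..<Q + ?M] ! j
       = (replicate (Q + ?m) (replicate (length p) A) @ tp p) ! j"
    proof (cases "j < Q + ?m")
      case True
      have "map (\<lambda>x. if j < Q + x then A else Dollar) p = replicate (length p) A"
      proof (rule nth_equalityI)
        fix i assume "i < length (map (\<lambda>x. if j < Q + x then A else Dollar) p)"
        then have "p ! i \<in> set p" by simp
        then have "?m \<le> p ! i" by simp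
        then have "j < Q + p ! i" using True by linarith
        then show "map (\<lambda>x. if j < Q + x then A else Dollar) p ! i = replicate (length p) A ! i"
          using \<open>i < _\<close> by simp
      qed simp
      then show ?thesis unfolding lhs using True by (simp add: nth_append)
    next
      case False
      have "(tp p) ! (j - (Q + ?m)) = map (\<lambda>x. if j - Q < x then A else Dollar) p"
        unfolding tp_def using False jM by simp
      moreover have "map (\<lambda>x. if j - Q < x then A else Dollar) p = map (\<lambda>x. if j < Q + x then A else Dollar) p"
        using False by (intro map_cong) auto
      ultimately show ?thesis unfolding lhs using False by (simp add: nth_append)
    qed
  qed
qed

lemma tp_ok:
  assumes "p \<noteq> []"
  shows "replicate (length p) A \<notin> set (tp p)"
proof
  assume "replicate (length p) A \<in> set (tp p)"
  then obtain s where s: "Min (set p) \<le> s" "replicate (length p) A = map (\<lambda>x. if s < x then A else Dollar) p"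
    unfolding tp_def by auto
  have "Min (set p) \<in> set p" using assms by simp
  then obtain i where i: "i < length p" "p ! i = Min (set p)" by (metis in_set_conv_nth)
  have "replicate (length p) A ! i = Dollar" using s i by simp
  then show False using i by simp
qed


lemma L_rep: "set w \<subseteq> {A} \<Longrightarrow> w = replicate (length w) A"
  by (metis replicate_length_same singletonD subsetD)

lemma L_char: "{w. set w \<subseteq> {A}} = {w. \<exists>c. w = replicate c A @ [] \<and> c mod 1 = (0::nat)}"
  using L_rep by fastforce

lemma conv_empty: "conv [] = []" by (simp add: conv_def)

theorem lemma2p9:
  fixes S :: "'u set" and ar :: "nat list" and Rs :: "'u list set list"
    and I :: "'i set" and Si :: "'i \<Rightarrow> 'v set" and Rsi :: "'i \<Rightarrow> 'v list set list"
  assumes "finite S"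
    and "rel_structure S ar Rs"
    and "countable I" and "infinite I"
    and "\<forall>i\<in>I. rel_structure (Si i) ar (Rsi i)"
    and "\<forall>i\<in>I. \<exists>f. rel_iso f (Si i) (Rsi i) S Rs"
  shows "unary_FA_presentable (disj_union_univ I Si) ar (disj_union_rels I (length ar) Rsi)"
proof -
  define F where "F = (\<lambda>i. SOME f. rel_iso f (Si i) (Rsi i) S Rs)"
  have Fiso: "rel_iso (F i) (Si i) (Rsi i) S Rs" if "i \<in> I" for i
    unfolding F_def using assms(6) that by (metis someI_ex)
  have Fbij: "bij_betw (F i) (Si i) S" if "i \<in> I" for i
    using Fiso[OF that] unfolding rel_iso_def by blast
  have lenR: "length (Rsi i) = length ar" if "i \<in> I" for i
    using assms(5) that unfolding rel_structure_def by blast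
  have Frel: "t \<in> Rsi i ! k \<longleftrightarrow> map (F i) t \<in> Rs ! k"
    if "i \<in> I" "k < length ar" "set t \<subseteq> Si i" for i k t
    using Fiso[OF that(1)] lenR[OF that(1)] that unfolding rel_iso_def by auto
  let ?Rels = "disj_union_rels I (length ar) Rsi"
  have RelsK: "?Rels ! k = {t. \<exists>i\<in>I. (\<forall>x\<in>set t. fst x = i) \<and> map snd t \<in> Rsi i ! k}"
    if "k < length ar" for k
    using that unfolding disj_union_rels_def by simp
  show ?thesis
  proof (cases "S = {}")
    case True
    have Sie: "Si i = {}" if "i \<in> I" for i using Fbij[OF that] True by (simp add: bij_betw_def)
    show ?thesis unfolding unary_FA_presentable_def
    proof (intro exI[of _ "{}"] exI[of _ "\<lambda>_. undefined"] conjI allI impI ballI)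
      show "regular ({} :: sym list set)" by (rule regI) (rule fq_empty)
      show "(\<lambda>_. undefined) ` {} = disj_union_univ I Si" unfolding disj_union_univ_def using Sie by auto
      show "regular {conv [w1, w2] |w1 w2. w1 \<in> {} \<and> w2 \<in> {} \<and> undefined = undefined}"
        by (rule regI) (simp add: fq_empty)
      fix k assume k: "k < length ar"
      show "regular {conv ws |ws. length ws = ar ! k \<and> set ws \<subseteq> {} \<and> map (\<lambda>_. undefined) ws \<in> ?Rels ! k}"
        by (rule regI, rule fq_small) (auto simp: conv_empty)
    qed simp
  next
    case False
    define n where "n = card S"
    have npos: "n > 0" using False assms(1) n_def by (simp add: card_gt_0_iff)
    obtain sS where sS: "bij_betw sS {0..<n} S" using ex_bij_betw_nat_finite[OF assms(1)] n_def by blast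
    define e where "e = from_nat_into I"
    have ebij: "bij_betw e UNIV I" unfolding e_def using bij_betw_from_nat_into assms(3,4) by blast
    define G where "G = (\<lambda>i. inv_into (Si i) (F i))"
    have Gbij: "bij_betw (G i) S (Si i)" if "i \<in> I" for i
      unfolding G_def using Fbij[OF that] by (rule bij_betw_inv_into)
    have FG: "F i (G i y) = y" if "i \<in> I" "y \<in> S" for i y
      unfolding G_def using Fbij[OF that(1)] that(2) by (simp add: bij_betw_inv_into_right)
    have GF: "G i (F i x) = x" if "i \<in> I" "x \<in> Si i" for i x
      unfolding G_def using Fbij[OF that(1)] that(2) by (simp add: bij_betw_inv_into_left)
    have sSin: "sS x \<in> S" if "x < n" for x using sS that by (auto simp: bij_betw_def)
    have eI: "e q \<in> I" for q using ebij by (auto simp: bij_betw_def)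
    have einj: "e q = e q' \<Longrightarrow> q = q'" for q q' using ebij by (auto simp: bij_betw_def inj_def)
    define \<phi> where "\<phi> = (\<lambda>w::sym list. (e (length w div n), G (e (length w div n)) (sS (length w mod n))))"
    define L where "L = {w::sym list. set w \<subseteq> {A}}"
    have \<phi>rep: "\<phi> (replicate (q * n + x) A) = (e q, G (e q) (sS x))" if "x < n" for q x
      unfolding \<phi>_def using that by simp
    have \<phi>eq: "length w1 = length w2" if "\<phi> w1 = \<phi> w2" for w1 w2
    proof -
      have d: "length w1 div n = length w2 div n" using that einj unfolding \<phi>_def by auto
      let ?i = "e (length w1 div n)"
      have "G ?i (sS (length w1 mod n)) = G ?i (sS (length w2 mod n))" using that d unfolding \<phi>_def by auto
      moreover have "sS (length w1 mod n) \<in> S" "sS (length w2 mod n) \<in> S" using sSin npos by auto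
      ultimately have "sS (length w1 mod n) = sS (length w2 mod n)"
        using Gbij[OF eI] by (auto simp: bij_betw_def inj_on_def)
      then have "length w1 mod n = length w2 mod n" using sS npos by (auto simp: bij_betw_def inj_on_def)
      with d show ?thesis by (metis div_mult_mod_eq)
    qed
    show ?thesis unfolding unary_FA_presentable_def
    proof (intro exI[of _ L] exI[of _ \<phi>] conjI allI impI ballI)
      show "\<And>w. w \<in> L \<Longrightarrow> set w \<subseteq> {A}" unfolding L_def by simp
      show "regular L" unfolding L_def L_char by (rule regI, rule fq_X) auto
      show "\<phi> ` L = disj_union_univ I Si"
      proof
        show "\<phi> ` L \<subseteq> disj_union_univ I Si"
        proof
          fix z assume "z \<in> \<phi> ` L"
          then obtain w where z: "z = \<phi> w" by blast
          let ?i = "e (length w div n)"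
          have "sS (length w mod n) \<in> S" using sSin npos by simp
          then have "G ?i (sS (length w mod n)) \<in> Si ?i" using Gbij[OF eI] by (auto simp: bij_betw_def)
          then show "z \<in> disj_union_univ I Si" unfolding z disj_union_univ_def \<phi>_def using eI by auto
        qed
        show "disj_union_univ I Si \<subseteq> \<phi> ` L"
        proof
          fix z assume "z \<in> disj_union_univ I Si"
          then obtain i x where z: "z = (i,x)" "i \<in> I" "x \<in> Si i" unfolding disj_union_univ_def by auto
          obtain q where q: "e q = i" using ebij z(2) by (metis bij_betw_imp_surj_on rangeE)
          have "F i x \<in> S" using Fbij[OF z(2)] z(3) by (auto simp: bij_betw_def)
          then obtain j where j: "j < n" "sS j = F i x" using sS by (metis atLeastLessThan_iff bij_betw_imp_surj_on imageE)
          have "\<phi> (replicate (q*n+j) A) = z" using \<phi>rep[OF j(1)] q j GF z by simp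
          moreover have "replicate (q*n+j) A \<in> L" unfolding L_def by auto
          ultimately show "z \<in> \<phi> ` L" by blast
        qed
      qed
      have "{conv [w1, w2] |w1 w2. w1 \<in> L \<and> w2 \<in> L \<and> \<phi> w1 = \<phi> w2}
          = {w. \<exists>c. w = replicate c [A,A] @ [] \<and> c mod 1 = (0::nat)}"
      proof (intro set_eqI iffI)
        fix w assume "w \<in> {conv [w1, w2] |w1 w2. w1 \<in> L \<and> w2 \<in> L \<and> \<phi> w1 = \<phi> w2}"
        then obtain w1 w2 where w: "w = conv [w1,w2]" "w1 \<in> L" "w2 \<in> L" "\<phi> w1 = \<phi> w2" by blast
        have "w1 = replicate (length w1) A" "w2 = replicate (length w2) A"
          using w(2,3) L_rep unfolding L_def by auto
        then have "w1 = replicate (length w1) A" "w2 = replicate (length w1) A"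
          using \<phi>eq[OF w(4)] by auto
        then have "w = conv (map (\<lambda>x. replicate (length w1 + x) A) [0,0])" using w(1) by simp
        also have "\<dots> = replicate (length w1) [A,A]" by (subst conv_rep) (auto simp: tp_def numeral_2_eq_2)
        finally show "w \<in> {w. \<exists>c. w = replicate c [A,A] @ [] \<and> c mod 1 = (0::nat)}" by auto
      next
        fix w assume "w \<in> {w. \<exists>c. w = replicate c [A,A] @ [] \<and> c mod 1 = (0::nat)}"
        then obtain c where c: "w = replicate c [A,A]" by auto
        have "conv (map (\<lambda>x. replicate (c + x) A) [0,0]) = replicate c [A,A]"
          by (subst conv_rep) (auto simp: tp_def numeral_2_eq_2)
        then have "w = conv [replicate c A, replicate c A]" using c by simp
        moreover have "replicate c A \<in> L" unfolding L_def by auto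
        ultimately show "w \<in> {conv [w1, w2] |w1 w2. w1 \<in> L \<and> w2 \<in> L \<and> \<phi> w1 = \<phi> w2}" by blast
      qed
      then show "regular {conv [w1, w2] |w1 w2. w1 \<in> L \<and> w2 \<in> L \<and> \<phi> w1 = \<phi> w2}"
        by (simp only:) (rule regI, rule fq_X, auto)
      fix k assume k: "k < length ar"
      show "regular {conv ws |ws. length ws = ar ! k \<and> set ws \<subseteq> L \<and> map \<phi> ws \<in> ?Rels ! k}"
      proof (cases "ar ! k = 0")
        case True
        show ?thesis using True by (intro regI fq_small) (auto simp: conv_empty)
      next
        case False
        let ?r = "ar ! k"
        define T where "T = {p. length p = ?r \<and> set p \<subseteq> {..<n} \<and> map sS p \<in> Rs ! k}"
        define X where "X = (\<lambda>p. {w. \<exists>c. w = replicate c (replicate (length p) A) @ tp p \<and> c mod n = Min (set p)})"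
        have Tfin: "finite T"
          by (rule finite_subset[OF _ finite_lists_length_eq[of "{..<n}" ?r]]) (auto simp: T_def)
        have pne: "p \<noteq> []" if "p \<in> T" for p using that False unfolding T_def by auto
        have eqU: "{conv ws |ws. length ws = ?r \<and> set ws \<subseteq> L \<and> map \<phi> ws \<in> ?Rels ! k} = (\<Union>p\<in>T. X p)"
        proof (intro set_eqI iffI)
          fix w assume "w \<in> {conv ws |ws. length ws = ?r \<and> set ws \<subseteq> L \<and> map \<phi> ws \<in> ?Rels ! k}"
          then obtain ws where ws: "w = conv ws" "length ws = ?r" "set ws \<subseteq> L" "map \<phi> ws \<in> ?Rels ! k" by blast
          obtain i where i: "i \<in> I" "\<forall>x\<in>set (map \<phi> ws). fst x = i" "map snd (map \<phi> ws) \<in> Rsi i ! k"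
            using ws(4) RelsK[OF k] by auto
          have wsne: "ws \<noteq> []" using ws(2) False by auto
          define q where "q = length (hd ws) div n"
          have eq_i: "e (length w' div n) = i" if "w' \<in> set ws" for w' using i(2) that unfolding \<phi>_def by auto
          have iq: "i = e q" unfolding q_def using eq_i[of "hd ws"] wsne by simp
          have divq: "length w' div n = q" if "w' \<in> set ws" for w' using eq_i[OF that] iq einj by auto
          define p where "p = map (\<lambda>w'. length w' mod n) ws"
          have wsp: "ws = map (\<lambda>x. replicate (q*n + x) A) p"
          proof -
            have "map (\<lambda>x. replicate (q*n + x) A) p = map (\<lambda>w'. w') ws"
              unfolding p_def map_map comp_def
            proof (rule map_cong[OF refl])
              fix w' assume w': "w' \<in> set ws"
              then have "w' = replicate (length w') A" using ws(3) L_rep unfolding L_def by auto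
              moreover have "length w' = q*n + length w' mod n" using divq[OF w'] by (metis div_mult_mod_eq)
              ultimately show "replicate (q*n + length w' mod n) A = w'" by metis
            qed
            then show ?thesis by simp
          qed
          have plen: "length p = ?r" using ws(2) p_def by simp
          have pbound: "set p \<subseteq> {..<n}" unfolding p_def using npos by auto
          have sndmap: "map snd (map \<phi> ws) = map (\<lambda>x. G i (sS x)) p"
            unfolding wsp using pbound \<phi>rep iq by (auto simp: comp_def)
          have setG: "set (map (\<lambda>x. G i (sS x)) p) \<subseteq> Si i"
            using pbound sSin Gbij[OF i(1)] by (auto simp: bij_betw_def)
          have mF: "map (F i) (map (\<lambda>x. G i (sS x)) p) = map sS p"
            using pbound sSin FG[OF i(1)] by auto
          have "map (\<lambda>x. G i (sS x)) p \<in> Rsi i ! k" using i(3) sndmap by simp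
          then have "map sS p \<in> Rs ! k" using Frel[OF i(1) k setG] mF by metis
          then have pT: "p \<in> T" unfolding T_def using plen pbound by simp
          have pne': "p \<noteq> []" using pne[OF pT] .
          have "w = replicate (q*n + Min (set p)) (replicate (length p) A) @ tp p"
            using ws(1) wsp conv_rep[OF pne'] by simp
          moreover have "Min (set p) \<in> set p" using pne' by simp
          then have "Min (set p) < n" using pbound by auto
          then have "(q*n + Min (set p)) mod n = Min (set p)" by simp
          ultimately have "w \<in> X p" unfolding X_def by blast
          then show "w \<in> (\<Union>p\<in>T. X p)" using pT by blast
        next
          fix w assume "w \<in> (\<Union>p\<in>T. X p)"
          then obtain p c where pT: "p \<in> T" and c: "w = replicate c (replicate (length p) A) @ tp p" "c mod n = Min (set p)"
            unfolding X_def by blast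
          have pb: "set p \<subseteq> {..<n}" "length p = ?r" "map sS p \<in> Rs ! k" using pT unfolding T_def by auto
          define q where "q = c div n"
          have cq: "c = q*n + Min (set p)" using c(2) unfolding q_def by (metis div_mult_mod_eq)
          define ws where "ws = map (\<lambda>x. replicate (q*n + x) A) p"
          have "w = conv ws" unfolding ws_def using conv_rep[OF pne[OF pT]] c(1) cq by simp
          moreover have "length ws = ?r" using pb ws_def by simp
          moreover have "set ws \<subseteq> L" unfolding ws_def L_def by auto
          moreover have "map \<phi> ws \<in> ?Rels ! k"
          proof -
            let ?i = "e q"
            have mp: "map \<phi> ws = map (\<lambda>x. (?i, G ?i (sS x))) p"
              unfolding ws_def using pb(1) \<phi>rep by auto
            have setG: "set (map (\<lambda>x. G ?i (sS x)) p) \<subseteq> Si ?i"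
            proof
              fix y assume "y \<in> set (map (\<lambda>x. G ?i (sS x)) p)"
              then obtain x where x: "x \<in> set p" "y = G ?i (sS x)" by auto
              have "sS x \<in> S" using x(1) pb(1) sSin by auto
              then show "y \<in> Si ?i" using x(2) Gbij[OF eI[of q]] by (auto simp: bij_betw_def)
            qed
            have mF: "map (F ?i) (map (\<lambda>x. G ?i (sS x)) p) = map sS p"
              using pb(1) sSin FG[OF eI] by auto
            then have "map (\<lambda>x. G ?i (sS x)) p \<in> Rsi ?i ! k"
              using Frel[OF eI k setG] pb(3) by metis
            moreover have "map snd (map \<phi> ws) = map (\<lambda>x. G ?i (sS x)) p" unfolding mp by (simp add: comp_def)
            moreover have "\<forall>x\<in>set (map \<phi> ws). fst x = ?i" unfolding mp by simp
            ultimately have "\<exists>i\<in>I. (\<forall>x\<in>set (map \<phi> ws). fst x = i) \<and> map snd (map \<phi> ws) \<in> Rsi i ! k"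
              using eI[of q] by metis
            then show ?thesis unfolding RelsK[OF k] by simp
          qed
          ultimately show "w \<in> {conv ws |ws. length ws = ?r \<and> set ws \<subseteq> L \<and> map \<phi> ws \<in> ?Rels ! k}" by blast
        qed
        have "fq (\<Union>p\<in>T. X p)"
        proof (rule fq_UN[OF Tfin])
          fix p assume "p \<in> T"
          show "fq (X p)" unfolding X_def by (rule fq_X[OF tp_ok[OF pne[OF \<open>p \<in> T\<close>]] npos])
        qed
        then show ?thesis unfolding eqU by (rule regI)
      qed
    qed
  qed
qed

end
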